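(* Let $n\ge2$ and $q_1,q_2\in\mathbb{C}$ with $q_1q_2\ne0$, put $q=-q_2/q_1$, and assume $[n]_q=1+q+\cdots+q^{n-1}\ne0$. Then the algebra $\operatorname{End}_{B_n}(\mathbf{E})$ of linear endomorphisms of $\mathbf{E}$ commuting with the generalized Burau action of $B_n$ is spanned by the identity operator $\mathrm{id}_{\mathbf{E}}$ and the operator $P$ whose matrix with respect to $e_1,\dots,e_n$ is the $n\times n$ matrix all of whose rows equal $(1,q,q^2,\dots,q^{n-1})$.
   Context: Artin's braid group $B_n$ has generators $\sigma_1,\dots,\sigma_{n-1}$ with relations $\sigma_i\sigma_{i+1}\sigma_i=\sigma_{i+1}\sigma_i\sigma_{i+1}$, $\sigma_i\sigma_j=\sigma_j\sigma_i$ ($|i-j|>1$). $\mathbf{E}=\mathbb{C}^n$ with basis $e_1,\dots,e_n$; the generalized Burau representation is $\sigma_ie_j=q_1e_j$ ($j\ne i,i+1$), $\sigma_ie_{i+1}=-q_2e_i$, $\sigma_ie_i=(q_1+q_2)e_i+q_1e_{i+1}$. *)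

theory Defs
  imports Complex_Main "Jordan_Normal_Form.Matrix"
begin

text \<open>Indices are 0-based: basis vectors e_0..e_(n-1), generators sigma_0..sigma_(n-2)
  (paper: e_1..e_n, sigma_1..sigma_(n-1)).  Entry (r,c) of the matrix of sigma_i is
  the coefficient of e_r in sigma_i e_c.\<close>

definition burau_gen :: "nat \<Rightarrow> complex \<Rightarrow> complex \<Rightarrow> nat \<Rightarrow> complex mat" where
  "burau_gen n q1 q2 i = mat n n (\<lambda>(r, c).
     if c = i then (if r = i then q1 + q2 else if r = i + 1 then q1 else 0)
     else if c = i + 1 then (if r = i then - q2 else 0)
     else (if r = c then q1 else 0))"

definition End_Bn :: "nat \<Rightarrow> complex \<Rightarrow> complex \<Rightarrow> complex mat set" where
  "End_Bn n q1 q2 = {A \<in> carrier_mat n n.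
     \<forall>i < n - 1. A * burau_gen n q1 q2 i = burau_gen n q1 q2 i * A}"

definition P_mat :: "nat \<Rightarrow> complex \<Rightarrow> complex mat" where
  "P_mat n q = mat n n (\<lambda>(r, c). q ^ c)"

end

theory Submission imports Defs begin

lemma sum_two:
  fixes f :: "nat \<Rightarrow> complex"
  assumes "i + 1 < n"
  shows "(\<Sum>k<n. f k) = f i + f (i+1) + (\<Sum>k\<in>{..<n}-{i,i+1}. f k)"
proof -
  have "(\<Sum>k<n. f k) = f i + (\<Sum>k\<in>{..<n}-{i}. f k)"
    using assms by (subst sum.remove[of _ i]) auto
  also have "(\<Sum>k\<in>{..<n}-{i}. f k) = f (i+1) + (\<Sum>k\<in>{..<n}-{i}-{i+1}. f k)"
    using assms by (subst sum.remove[of _ "i+1"]) auto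
  finally show ?thesis by (simp add: set_diff_eq insert_commute Diff_insert2[symmetric] add.assoc)
qed

lemma AS_entry:
  assumes A: "A \<in> carrier_mat n n" and i: "i + 1 < n" and rc: "r < n" "c < n"
  shows "(A * burau_gen n q1 q2 i) $$ (r,c) =
    (if c = i then (q1+q2)*A$$(r,i) + q1*A$$(r,i+1) else if c = i+1 then -q2*A$$(r,i) else q1*A$$(r,c))"
proof -
  have "(A * burau_gen n q1 q2 i) $$ (r,c) = (\<Sum>k<n. A $$ (r,k) * burau_gen n q1 q2 i $$ (k,c))"
    using A rc by (simp add: burau_gen_def scalar_prod_def lessThan_atLeast0 row_def col_def)
  also have "\<dots> = (if c = i then (q1+q2)*A$$(r,i) + q1*A$$(r,i+1) else if c = i+1 then -q2*A$$(r,i) else q1*A$$(r,c))"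
  proof -
    have rest: "(\<Sum>k\<in>{..<n}-{i,i+1}. A $$ (r,k) * burau_gen n q1 q2 i $$ (k,c)) =
       (if c \<noteq> i \<and> c \<noteq> i+1 then q1*A$$(r,c) else 0)"
    proof -
      have "(\<Sum>k\<in>{..<n}-{i,i+1}. A $$ (r,k) * burau_gen n q1 q2 i $$ (k,c)) =
        (\<Sum>k\<in>{..<n}-{i,i+1}. if k = c then q1*A$$(r,c) else 0)"
        using rc by (intro sum.cong) (auto simp: burau_gen_def)
      also have "\<dots> = (if c \<noteq> i \<and> c \<noteq> i+1 then q1*A$$(r,c) else 0)"
        using rc by (subst sum.delta) auto
      finally show ?thesis .
    qed
    show ?thesis using i rc by (subst sum_two[OF i], subst rest) (auto simp: burau_gen_def algebra_simps)
  qed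
  finally show ?thesis .
qed

lemma SA_entry:
  assumes A: "A \<in> carrier_mat n n" and i: "i + 1 < n" and rc: "r < n" "c < n"
  shows "(burau_gen n q1 q2 i * A) $$ (r,c) =
    (if r = i then (q1+q2)*A$$(i,c) - q2*A$$(i+1,c) else if r = i+1 then q1*A$$(i,c) else q1*A$$(r,c))"
proof -
  have "(burau_gen n q1 q2 i * A) $$ (r,c) = (\<Sum>k<n. burau_gen n q1 q2 i $$ (r,k) * A $$ (k,c))"
    using A rc by (simp add: burau_gen_def scalar_prod_def lessThan_atLeast0 row_def col_def)
  also have "\<dots> = (if r = i then (q1+q2)*A$$(i,c) - q2*A$$(i+1,c) else if r = i+1 then q1*A$$(i,c) else q1*A$$(r,c))"
  proof -
    have rest: "(\<Sum>k\<in>{..<n}-{i,i+1}. burau_gen n q1 q2 i $$ (r,k) * A $$ (k,c)) =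
       (if r \<noteq> i \<and> r \<noteq> i+1 then q1*A$$(r,c) else 0)"
    proof -
      have "(\<Sum>k\<in>{..<n}-{i,i+1}. burau_gen n q1 q2 i $$ (r,k) * A $$ (k,c)) =
        (\<Sum>k\<in>{..<n}-{i,i+1}. if k = r then q1*A$$(r,c) else 0)"
        using rc by (intro sum.cong) (auto simp: burau_gen_def)
      also have "\<dots> = (if r \<noteq> i \<and> r \<noteq> i+1 then q1*A$$(r,c) else 0)"
        using rc by (subst sum.delta) auto
      finally show ?thesis .
    qed
    show ?thesis using i rc by (subst sum_two[OF i], subst rest) (auto simp: burau_gen_def algebra_simps)
  qed
  finally show ?thesis .
qed

theorem theorem4p1:
  fixes n :: nat and q1 q2 :: complex
  assumes "n \<ge> 2" and "q1 * q2 \<noteq> 0"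
    and "(\<Sum>k<n. (- q2 / q1) ^ k) \<noteq> 0"
  shows "End_Bn n q1 q2 =
    {a \<cdot>\<^sub>m 1\<^sub>m n + b \<cdot>\<^sub>m P_mat n (- q2 / q1) | a b :: complex. True}"
proof
  define q where "q = - q2 / q1"
  have q1: "q1 \<noteq> 0" and q2: "q2 \<noteq> 0" using assms(2) by auto
  have qq: "q1 * q = - q2" using q1 by (simp add: q_def)
  show "End_Bn n q1 q2 \<subseteq> {a \<cdot>\<^sub>m 1\<^sub>m n + b \<cdot>\<^sub>m P_mat n (- q2 / q1) | a b :: complex. True}"
  proof
    fix A assume "A \<in> End_Bn n q1 q2"
    hence A: "A \<in> carrier_mat n n" and comm: "\<And>i. i < n - 1 \<Longrightarrow> A * burau_gen n q1 q2 i = burau_gen n q1 q2 i * A"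
      by (auto simp: End_Bn_def)
    have E: "(if c = i then (q1+q2)*A$$(r,i) + q1*A$$(r,i+1) else if c = i+1 then -q2*A$$(r,i) else q1*A$$(r,c))
      = (if r = i then (q1+q2)*A$$(i,c) - q2*A$$(i+1,c) else if r = i+1 then q1*A$$(i,c) else q1*A$$(r,c))"
      if "i + 1 < n" "r < n" "c < n" for i r c
    proof -
      have "i < n - 1" using that by simp
      hence "(A * burau_gen n q1 q2 i) $$ (r,c) = (burau_gen n q1 q2 i * A) $$ (r,c)"
        using comm by simp
      thus ?thesis unfolding AS_entry[OF A that] SA_entry[OF A that] .
    qed
    have F1: "A$$(r,i+1) = q * A$$(r,i)" if "i+1<n" "r<n" "r \<noteq> i" "r \<noteq> i+1" for r i
      using E[OF that(1,2), of "i+1"] that q1 by (simp add: q_def field_simps)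
    have F2: "A$$(i+1,c) = A$$(i,c)" if "i+1<n" "c<n" "c \<noteq> i" "c \<noteq> i+1" for c i
      using E[OF that(1) _ that(2), of "i+1"] that q1 by simp
    have F3: "q2 * A$$(i+1,i+1) = (q1+q2) * A$$(i,i+1) + q2 * A$$(i,i)" if "i+1<n" for i
      using E[OF that, of i "i+1"] that by (simp add: algebra_simps)
    have F4: "A$$(i,i+1) = q * A$$(i+1,i)" if "i+1<n" for i
      using E[OF that, of "i+1" "i+1"] that q1 by (simp add: q_def field_simps)
    define b where "b = A$$(1,0)"
    define a where "a = A$$(0,0) - b"
    have col0: "A$$(r,0) = b" if "0 < r" "r < n" for r
      using that
    proof (induction r)
      case (Suc r) thus ?case using F2[of r 0] by (cases r) (auto simp: b_def)
    qed simp
    have off: "\<forall>r<n. r \<noteq> c \<longrightarrow> A$$(r,c) = b * q^c" if "c < n" for c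
      using that
    proof (induction c)
      case 0 thus ?case using col0 by auto
    next
      case (Suc c)
      show ?case
      proof (intro allI impI)
        fix r assume r: "r < n" "r \<noteq> Suc c"
        show "A$$(r,Suc c) = b * q^Suc c"
        proof (cases "r = c")
          case True
          thus ?thesis using F4[of c] Suc by auto
        next
          case False
          thus ?thesis using F1[of c r] Suc r by auto
        qed
      qed
    qed
    have diag: "A$$(c,c) = a + b * q^c" if "c < n" for c
      using that
    proof (induction c)
      case 0 thus ?case by (simp add: a_def)
    next
      case (Suc c)
      have "q2 * A$$(Suc c, Suc c) = (q1+q2) * (b * q^Suc c) + q2 * (a + b*q^c)"
        using F3[of c] off[of "Suc c"] Suc by auto
      also have "\<dots> = q2 * (a + b * q^Suc c) + b * q^c * (q1 * q + q2)"
        by (simp add: algebra_simps)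
      also have "\<dots> = q2 * (a + b * q^Suc c)" using qq by simp
      finally show ?case using q2 by simp
    qed
    have "A = a \<cdot>\<^sub>m 1\<^sub>m n + b \<cdot>\<^sub>m P_mat n q"
      by (rule eq_matI) (use A off diag in \<open>auto simp: P_mat_def\<close>)
    thus "A \<in> {a \<cdot>\<^sub>m 1\<^sub>m n + b \<cdot>\<^sub>m P_mat n (- q2 / q1) | a b :: complex. True}"
      by (auto simp: q_def)
  qed
next
  define q where "q = - q2 / q1"
  have q1: "q1 \<noteq> 0" and q2: "q2 \<noteq> 0" using assms(2) by auto
  have qq: "q1 * q = - q2" using q1 by (simp add: q_def)
  show "{a \<cdot>\<^sub>m 1\<^sub>m n + b \<cdot>\<^sub>m P_mat n (- q2 / q1) | a b :: complex. True} \<subseteq> End_Bn n q1 q2"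
  proof safe
    fix a b :: complex
    define M where "M = a \<cdot>\<^sub>m 1\<^sub>m n + b \<cdot>\<^sub>m P_mat n q"
    have M: "M \<in> carrier_mat n n" by (simp add: M_def P_mat_def)
    have Me: "M $$ (r,c) = (if r = c then a else 0) + b * q^c" if "r<n" "c<n" for r c
      using that by (simp add: M_def P_mat_def)
    have "M * burau_gen n q1 q2 i = burau_gen n q1 q2 i * M" if i: "i < n - 1" for i
    proof (rule eq_matI)
      show "dim_row (M * burau_gen n q1 q2 i) = dim_row (burau_gen n q1 q2 i * M)"
        "dim_col (M * burau_gen n q1 q2 i) = dim_col (burau_gen n q1 q2 i * M)"
        using M by (auto simp: burau_gen_def)
      fix r c assume "r < dim_row (burau_gen n q1 q2 i * M)" "c < dim_col (burau_gen n q1 q2 i * M)"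
      hence rc: "r < n" "c < n" using M by (auto simp: burau_gen_def)
      have i1: "i + 1 < n" using i by simp
      have h: "q1 * q^Suc i = - q2 * q^i"
      proof -
        have "q1 * q^Suc i = (q1 * q) * q^i" by simp
        thus ?thesis using qq by simp
      qed
      show "(M * burau_gen n q1 q2 i) $$ (r,c) = (burau_gen n q1 q2 i * M) $$ (r,c)"
        unfolding AS_entry[OF M i1 rc] SA_entry[OF M i1 rc]
        using rc i1 h
        by (cases "r = i"; cases "r = i+1"; cases "c = i"; cases "c = i+1") (simp_all add: Me algebra_simps)
    qed
    hence "M \<in> End_Bn n q1 q2" using M by (simp add: End_Bn_def)
    thus "a \<cdot>\<^sub>m 1\<^sub>m n + b \<cdot>\<^sub>m P_mat n (- q2 / q1) \<in> End_Bn n q1 q2" by (simp add: M_def q_def)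
  qed
qed

end
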